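(* Let $X_1,X_2,\dots,X_K$ be identically distributed, unbounded, $m$-dependent random variables (with $m$ fixed) having an exponentially-dominated tail. Let $(M_K)$ be positive integers with $M_K\to\infty$ and $M_K/\ln^{\mu}K\to0$ for some $\mu<1$. Then $X_{(K-M_K+1)}/X_{(K)}\to1$ in probability as $K\to\infty$.
   Context: $X_{(j)}$ denotes the $j$-th smallest of $X_1,\dots,X_K$. A sequence is $m$-dependent if for every $s$ the families $(X_k)_{k\le s}$ and $(X_k)_{k>s+m}$ are independent. Exponentially-dominated tail: a random variable $X$ with continuous CDF $F_X$ has an exponentially-dominated tail if there exist $\alpha>0,\beta\in\mathbb R,\lambda>0,\gamma>0$ with $\lim_{x\to\infty}\frac{1-F_X(x)}{\alpha x^{\beta}e^{-\lambda x^{\gamma}}}=1$. *)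

theory Defs
  imports "HOL-Probability.Probability"
begin

definition order_stat :: "(nat \<Rightarrow> real) \<Rightarrow> nat \<Rightarrow> nat \<Rightarrow> real" where
  "order_stat x K j = sort (map x [1..<Suc K]) ! (j - 1)"

definition gen_sigma :: "'a measure \<Rightarrow> (nat \<Rightarrow> 'a \<Rightarrow> real) \<Rightarrow> nat set \<Rightarrow> 'a set set" where
  "gen_sigma M X I = sigma_sets (space M) (\<Union>k\<in>I. {X k -` A \<inter> space M | A. A \<in> sets borel})"

definition m_dependent :: "'a measure \<Rightarrow> nat \<Rightarrow> (nat \<Rightarrow> 'a \<Rightarrow> real) \<Rightarrow> bool" where
  "m_dependent M m X \<longleftrightarrow>
     (\<forall>s. prob_space.indep_set M (gen_sigma M X {1..s}) (gen_sigma M X {s + m <..}))"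

definition exp_dominated_tail :: "(real \<Rightarrow> real) \<Rightarrow> bool" where
  "exp_dominated_tail F \<longleftrightarrow>
     (\<exists>\<alpha> \<beta> lam \<gamma>. \<alpha> > 0 \<and> lam > 0 \<and> \<gamma> > 0 \<and>
        ((\<lambda>x. (1 - F x) / (\<alpha> * x powr \<beta> * exp (- lam * x powr \<gamma>))) \<longlongrightarrow> 1) at_top)"

end

theory Submission
  imports Defs "HOL-Real_Asymp.Real_Asymp"
begin


lemma os_len: "length (sort (map x [1..<Suc K])) = K"
  by simp

lemma os_set: "set (sort (map (x::nat\<Rightarrow>real) [1..<Suc K])) = x ` {1..K}"
  by (auto simp: atLeastLessThanSuc_atLeastAtMost)

lemma os_max_le:
  assumes "K \<ge> 1" "\<forall>i\<in>{1..K}. x i \<le> a"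
  shows "order_stat x K K \<le> a"
proof -
  have "sort (map x [1..<Suc K]) ! (K - 1) \<in> set (sort (map x [1..<Suc K]))"
    using assms(1) by (intro nth_mem) simp
  then show ?thesis using assms(2) unfolding order_stat_def os_set by auto
qed

lemma os_mono:
  assumes "1 \<le> M" "M \<le> K"
  shows "order_stat x K (K - M + 1) \<le> order_stat x K K"
  unfolding order_stat_def
  using assms by (intro sorted_nth_mono[OF sorted_sort]) auto

lemma card_filter_upt:
  "length (filter P (map (x::nat\<Rightarrow>real) [1..<Suc K])) = card {i\<in>{1..K}. P (x i)}"
proof -
  have "length (filter P (map x [1..<Suc K])) = length (filter (P \<circ> x) [1..<Suc K])"
    by (simp add: filter_map)
  also have "\<dots> = card (set (filter (P \<circ> x) [1..<Suc K]))"
    by (metis distinct_card distinct_filter distinct_upt)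
  also have "set (filter (P \<circ> x) [1..<Suc K]) = {i\<in>{1..K}. P (x i)}"
    by auto
  finally show ?thesis .
qed

lemma os_count:
  assumes "1 \<le> M" "M \<le> K" "M \<le> card {i\<in>{1..K}. b < x i}"
  shows "b < order_stat x K (K - M + 1)"
proof (rule ccontr)
  define s where "s = sort (map x [1..<Suc K])"
  assume "\<not> b < order_stat x K (K - M + 1)"
  then have le: "s ! (K - M) \<le> b" unfolding order_stat_def s_def using assms by simp
  have ls: "length s = K" unfolding s_def by simp
  have srt: "sorted s" unfolding s_def by simp
  have tk: "filter (\<lambda>v. b < v) (take (K - M + 1) s) = []"
  proof -
    have "\<forall>v\<in>set (take (K - M + 1) s). v \<le> b"
    proof
      fix v assume "v \<in> set (take (K - M + 1) s)"
      then obtain j where j: "j < length (take (K - M + 1) s)" "v = take (K - M + 1) s ! j"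
        by (auto simp: in_set_conv_nth)
      then have "j \<le> K - M" "v = s ! j" using ls assms by auto
      then have "v \<le> s ! (K - M)" using srt ls assms by (auto intro: sorted_nth_mono)
      then show "v \<le> b" using le by simp
    qed
    then show ?thesis by (auto simp: filter_empty_conv)
  qed
  have "length (filter (\<lambda>v. b < v) s) = length (filter (\<lambda>v. b < v) (take (K - M + 1) s))
        + length (filter (\<lambda>v. b < v) (drop (K - M + 1) s))"
    by (metis append_take_drop_id filter_append length_append)
  also have "\<dots> \<le> length (drop (K - M + 1) s)" using tk length_filter_le[of _ "drop (K - M + 1) s"] by simp
  also have "\<dots> = M - 1" using ls assms by simp
  finally have "length (filter (\<lambda>v. b < v) s) \<le> M - 1" .
  moreover have "length (filter (\<lambda>v. b < v) s) = length (filter (\<lambda>v. b < v) (map x [1..<Suc K]))"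
    unfolding s_def by (metis mset_filter mset_sort size_mset)
  ultimately show False using card_filter_upt[of "\<lambda>v. b < v" x K] assms by simp
qed




context prob_space
begin

lemma ev_gt:
  fixes f :: "'a \<Rightarrow> real"
  assumes [measurable]: "f \<in> borel_measurable M"
  shows "{\<omega>\<in>space M. a < f \<omega>} \<in> events"
  by measurable

lemma same_prob:
  fixes X :: "nat \<Rightarrow> 'a \<Rightarrow> real"
  assumes meas: "\<And>k. k \<ge> 1 \<Longrightarrow> X k \<in> borel_measurable M"
    and ident: "\<And>k. k \<ge> 1 \<Longrightarrow> distr M borel (X k) = distr M borel (X 1)"
    and k: "k \<ge> 1"
  shows "prob {\<omega>\<in>space M. X k \<omega> > a} = prob {\<omega>\<in>space M. X 1 \<omega> > a}"
proof -
  have m1: "X k \<in> measurable M borel" by (rule meas[OF k])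
  have m2: "X 1 \<in> measurable M borel" by (rule meas) simp
  have o: "{a<..} \<in> sets borel" by (rule borel_open[OF open_greaterThan])
  have e: "{\<omega>\<in>space M. X j \<omega> > a} = X j -` {a<..} \<inter> space M" for j by auto
  have "prob {\<omega>\<in>space M. X k \<omega> > a} = measure (distr M borel (X k)) {a<..}"
    unfolding e by (rule measure_distr[symmetric, OF m1 o])
  also have "\<dots> = measure (distr M borel (X 1)) {a<..}" by (simp only: ident[OF k])
  also have "\<dots> = prob {\<omega>\<in>space M. X 1 \<omega> > a}"
    unfolding e by (rule measure_distr[OF m2 o])
  finally show ?thesis .
qed

lemma union_bound:
  fixes X :: "nat \<Rightarrow> 'a \<Rightarrow> real"
  assumes meas: "\<And>k. k \<ge> 1 \<Longrightarrow> X k \<in> borel_measurable M"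
    and ident: "\<And>k. k \<ge> 1 \<Longrightarrow> distr M borel (X k) = distr M borel (X 1)"
  shows "prob {\<omega>\<in>space M. \<exists>i\<in>{1..K}. X i \<omega> > a} \<le> real K * prob {\<omega>\<in>space M. X 1 \<omega> > a}"
proof -
  have "{\<omega>\<in>space M. \<exists>i\<in>{1..K}. X i \<omega> > a} = (\<Union>i\<in>{1..K}. {\<omega>\<in>space M. X i \<omega> > a})"
    by auto
  also have "prob \<dots> \<le> (\<Sum>i\<in>{1..K}. prob {\<omega>\<in>space M. X i \<omega> > a})"
  proof (rule finite_measure_subadditive_finite)
    show "finite {1..K}" by simp
    show "(\<lambda>i. {\<omega>\<in>space M. X i \<omega> > a}) ` {1..K} \<subseteq> events"
      using ev_gt[OF meas] by auto
  qed
  also have "\<dots> = (\<Sum>i\<in>{1..K}. prob {\<omega>\<in>space M. X 1 \<omega> > a})"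
  proof (rule sum.cong[OF refl])
    fix i assume "i \<in> {1..K}"
    then show "prob {\<omega>\<in>space M. X i \<omega> > a} = prob {\<omega>\<in>space M. X 1 \<omega> > a}"
      by (intro same_prob[of X, OF meas ident]) auto
  qed
  finally show ?thesis by simp
qed

end



context prob_space
begin

lemma count_bound:
  fixes X :: "nat \<Rightarrow> 'a \<Rightarrow> real"
  assumes meas: "\<And>k. k \<ge> 1 \<Longrightarrow> X k \<in> borel_measurable M"
    and ident: "\<And>k. k \<ge> 1 \<Longrightarrow> distr M borel (X k) = distr M borel (X 1)"
    and mdep: "m_dependent M m X"
    and p_def: "p = prob {\<omega>\<in>space M. X 1 \<omega> > b}"
    and Mle: "2 * real M' \<le> real K * p" and pos: "real K * p > 0"
  shows "prob {\<omega>\<in>space M. (\<Sum>i\<in>{1..K}. indicator {\<omega>\<in>space M. X i \<omega> > b} \<omega>) < real M'}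
           \<le> 4 * (2 * real m + 1) / (real K * p)"
proof -
  define A where "A i = {\<omega>\<in>space M. X i \<omega> > b}" for i
  have Aev: "i \<ge> 1 \<Longrightarrow> A i \<in> events" for i unfolding A_def by (rule ev_gt[OF meas])
  have Asub: "A i \<subseteq> space M" for i unfolding A_def by auto
  have pA: "i \<ge> 1 \<Longrightarrow> prob (A i) = p" for i unfolding A_def p_def by (rule same_prob[of X, OF meas ident])
  have e: "A k = X k -` {b<..} \<inter> space M" for k unfolding A_def by auto
  have inS: "A k \<in> gen_sigma M X I" if "k \<in> I" for k I
    unfolding gen_sigma_def e
    apply (rule sigma_sets.Basic)
    apply (rule UN_I[of k])
     apply (rule that)
    apply (rule CollectI)
    apply (rule exI[of _ "{b<..}"])
    by (auto intro: borel_open[OF open_greaterThan])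
  have indep: "prob (A i \<inter> A j) = p * p" if i: "i \<ge> 1" and ij: "i + m < j" for i j
  proof -
    have I: "indep_set (gen_sigma M X {1..i}) (gen_sigma M X {i + m<..})"
      using mdep[unfolded m_dependent_def, rule_format, of i] .
    have "prob (A i \<inter> A j) = prob (A i) * prob (A j)"
      by (rule indep_setD[OF I inS inS]) (use i ij in auto)
    then show ?thesis using pA i ij by simp
  qed
  have pp: "p \<ge> 0" using p_def by simp
  define N where "N \<omega> = (\<Sum>i\<in>{1..K}. indicator (A i) \<omega> :: real)" for \<omega>
  define c where "c = real K * p"
  have Nmeas: "N \<in> borel_measurable M" unfolding N_def using Aev
    by (intro borel_measurable_sum) (auto intro: borel_measurable_indicator)
  have intI: "integrable M (indicator (A i) :: 'a \<Rightarrow> real)" if "i \<ge> 1" for i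
    using Aev[OF that] by (intro integrable_real_indicator) (auto simp: less_top[symmetric])
  have EN: "expectation N = c"
  proof -
    have "expectation N = (\<Sum>i\<in>{1..K}. expectation (indicator (A i)))"
      unfolding N_def by (rule Bochner_Integration.integral_sum[where I="{1..K}" and f="\<lambda>i \<omega>. indicator (A i) \<omega>"]) (auto intro: intI)
    also have "\<dots> = (\<Sum>i\<in>{1..K}. p)"
      using pA Asub by (intro sum.cong) (auto simp: Int_absorb2)
    finally show ?thesis unfolding c_def by simp
  qed
  define f where "f i \<omega> = indicator (A i) \<omega> - p" for i \<omega>
  have Nf: "N \<omega> - c = (\<Sum>i\<in>{1..K}. f i \<omega>)" for \<omega>
    unfolding N_def f_def c_def by (simp add: sum_subtractf)
  have sq: "(N \<omega> - c)^2 = (\<Sum>i\<in>{1..K}. \<Sum>j\<in>{1..K}. f i \<omega> * f j \<omega>)" for \<omega>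
    unfolding Nf power2_eq_square by (simp add: sum_product)
  have fexp: "f i \<omega> * f j \<omega> = indicator (A i \<inter> A j) \<omega> - p * indicator (A i) \<omega> - p * indicator (A j) \<omega> + p * p" for i j \<omega>
    unfolding f_def by (simp add: indicator_inter_arith algebra_simps)
  have fint: "integrable M (\<lambda>\<omega>. f i \<omega> * f j \<omega>) \<and> expectation (\<lambda>\<omega>. f i \<omega> * f j \<omega>) = prob (A i \<inter> A j) - p * p"
    if "i \<ge> 1" "j \<ge> 1" for i j
  proof -
    have ij: "A i \<inter> A j \<in> events" using Aev that by auto
    have i1: "integrable M (indicator (A i \<inter> A j) :: 'a \<Rightarrow> real)"
      using ij by (intro integrable_real_indicator) (auto simp: less_top[symmetric])
    have i2: "integrable M (\<lambda>\<omega>. indicator (A i \<inter> A j) \<omega> - p * indicator (A i) \<omega> - p * indicator (A j) \<omega> :: real)"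
      using i1 intI that by auto
    have "expectation (\<lambda>\<omega>. f i \<omega> * f j \<omega>) = expectation (\<lambda>\<omega>. indicator (A i \<inter> A j) \<omega> - p * indicator (A i) \<omega> - p * indicator (A j) \<omega> + p * p)"
      unfolding fexp ..
    also have "\<dots> = expectation (\<lambda>\<omega>. indicator (A i \<inter> A j) \<omega> - p * indicator (A i) \<omega> - p * indicator (A j) \<omega>) + p * p"
      using i2 by (subst Bochner_Integration.integral_add) (auto simp: prob_space)
    also have "expectation (\<lambda>\<omega>. indicator (A i \<inter> A j) \<omega> - p * indicator (A i) \<omega> - p * indicator (A j) \<omega>)
       = prob (A i \<inter> A j) - p * prob (A i) - p * prob (A j)"
      using i1 intI[OF that(1)] intI[OF that(2)] Asub
      by (simp add: Int_absorb2 Int_assoc)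
    finally have "expectation (\<lambda>\<omega>. f i \<omega> * f j \<omega>) = prob (A i \<inter> A j) - p * p"
      using pA that by simp
    moreover have "integrable M (\<lambda>\<omega>. f i \<omega> * f j \<omega>)"
      unfolding fexp using i2 by auto
    ultimately show ?thesis by simp
  qed
  have cov: "prob (A i \<inter> A j) - p * p \<le> (if i \<le> j + m \<and> j \<le> i + m then p else 0)"
    if "i \<in> {1..K}" "j \<in> {1..K}" for i j
  proof (cases "i \<le> j + m \<and> j \<le> i + m")
    case True
    have "prob (A i \<inter> A j) \<le> prob (A i)" using Aev that by (intro finite_measure_mono) auto
    then have h: "prob (A i \<inter> A j) \<le> p" using pA that by simp
    have "p * p \<ge> 0" using pp by simp
    with h have "prob (A i \<inter> A j) - p * p \<le> p" by linarith
    with True show ?thesis by simp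
  next
    case False
    then have "i + m < j \<or> j + m < i" by auto
    then have "prob (A i \<inter> A j) = p * p" using indep that by (metis Int_commute atLeastAtMost_iff)
    then show ?thesis using False by (simp only: if_False)
  qed
  have cardb: "card {j\<in>{1..K}. i \<le> j + m \<and> j \<le> i + m} \<le> 2 * m + 1" for i
  proof -
    have "card {j\<in>{1..K}. i \<le> j + m \<and> j \<le> i + m} \<le> card {i - m..i + m}"
      by (intro card_mono) auto
    then show ?thesis by simp
  qed
  have var: "expectation (\<lambda>\<omega>. (N \<omega> - c)^2) \<le> (2 * real m + 1) * c"
  proof -
    have "expectation (\<lambda>\<omega>. (N \<omega> - c)^2) = (\<Sum>i\<in>{1..K}. \<Sum>j\<in>{1..K}. expectation (\<lambda>\<omega>. f i \<omega> * f j \<omega>))"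
    proof -
      have "expectation (\<lambda>\<omega>. (N \<omega> - c)^2) = expectation (\<lambda>\<omega>. \<Sum>i\<in>{1..K}. \<Sum>j\<in>{1..K}. f i \<omega> * f j \<omega>)"
        unfolding sq ..
      also have "\<dots> = (\<Sum>i\<in>{1..K}. expectation (\<lambda>\<omega>. \<Sum>j\<in>{1..K}. f i \<omega> * f j \<omega>))"
        by (rule Bochner_Integration.integral_sum[where I="{1..K}" and f="\<lambda>i \<omega>. \<Sum>j\<in>{1..K}. f i \<omega> * f j \<omega>"])
          (use fint in \<open>auto intro!: integrable_sum\<close>)
      also have "\<dots> = (\<Sum>i\<in>{1..K}. \<Sum>j\<in>{1..K}. expectation (\<lambda>\<omega>. f i \<omega> * f j \<omega>))"
      proof (rule sum.cong[OF refl])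
        fix i assume i: "i \<in> {1..K}"
        show "expectation (\<lambda>\<omega>. \<Sum>j\<in>{1..K}. f i \<omega> * f j \<omega>) = (\<Sum>j\<in>{1..K}. expectation (\<lambda>\<omega>. f i \<omega> * f j \<omega>))"
          by (rule Bochner_Integration.integral_sum[where I="{1..K}" and f="\<lambda>j \<omega>. f i \<omega> * f j \<omega>"]) (use fint i in auto)
      qed
      finally show ?thesis .
    qed
    also have "\<dots> \<le> (\<Sum>i\<in>{1..K}. \<Sum>j\<in>{1..K}. (if i \<le> j + m \<and> j \<le> i + m then p else 0))"
      using fint cov by (intro sum_mono) auto
    also have "\<dots> = (\<Sum>i\<in>{1..K}. p * real (card {j\<in>{1..K}. i \<le> j + m \<and> j \<le> i + m}))"
      by (intro sum.cong refl) (simp add: sum.If_cases Int_def conj_commute)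
    also have "\<dots> \<le> (\<Sum>i\<in>{1..K}. p * (2 * real m + 1))"
    proof (intro sum_mono mult_left_mono pp)
      fix i show "real (card {j\<in>{1..K}. i \<le> j + m \<and> j \<le> i + m}) \<le> 2 * real m + 1"
        using cardb[of i] by linarith
    qed
    finally show ?thesis unfolding c_def by (simp add: algebra_simps)
  qed
  have int2: "integrable M (\<lambda>x. N x ^ 2)"
  proof -
    have "integrable M (\<lambda>\<omega>. (N \<omega> - c)^2 + 2 * c * N \<omega> - c * c)"
    proof -
      have "integrable M N" unfolding N_def using intI by auto
      moreover have "integrable M (\<lambda>\<omega>. (N \<omega> - c)^2)" unfolding sq using fint by (force intro!: integrable_sum)
      ultimately show ?thesis by auto
    qed
    moreover have "(\<lambda>\<omega>. (N \<omega> - c)^2 + 2 * c * N \<omega> - c * c) = (\<lambda>x. N x ^ 2)"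
      by (auto simp: power2_eq_square algebra_simps)
    ultimately show ?thesis by simp
  qed
  have cM: "c - real M' \<ge> c / 2" using Mle unfolding c_def by (simp add: mult.commute)
  have cpos: "c > 0" using pos c_def by simp
  have cheb: "prob {x\<in>space M. \<bar>N x - expectation N\<bar> \<ge> c - real M'} \<le> variance N / (c - real M')\<^sup>2"
    using cM cpos by (intro Chebyshev_inequality Nmeas int2) auto
  have "prob {\<omega>\<in>space M. N \<omega> < real M'} \<le> prob {x\<in>space M. \<bar>N x - expectation N\<bar> \<ge> c - real M'}"
    using Nmeas unfolding EN by (intro finite_measure_mono) auto
  also have "\<dots> \<le> variance N / (c - real M')\<^sup>2" by (rule cheb)
  also have "\<dots> \<le> ((2 * real m + 1) * c) / (c / 2)\<^sup>2"
    using var cM cpos unfolding EN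
    by (intro frac_le) (auto intro: power_mono)
  also have "\<dots> = 4 * (2 * real m + 1) / c" using cpos by (simp add: field_simps power2_eq_square)
  finally show ?thesis unfolding N_def A_def c_def .
qed

end


lemma asy1: fixes d c al :: real assumes "d>0" "c>0" "al > 0"
  shows "((\<lambda>x::real. x * (2 * (al * (c * ln x) powr e * exp (-(1+d) * ln x)))) \<longlongrightarrow> 0) at_top"
  using assms by real_asymp
lemma asy2: fixes d c al :: real assumes "d>0" "d<1" "c>0" "al > 0"
  shows "filterlim (\<lambda>x::real. x * (al * (c * ln x) powr e * exp (-(1-d) * ln x) / 2)) at_top at_top"
  using assms by real_asymp
lemma asy3: fixes d c al :: real assumes "d>0" "d<1" "c>0" "al > 0"
  shows "((\<lambda>x::real. ln x powr mu / (x * (al * (c * ln x) powr e * exp (-(1-d) * ln x) / 2))) \<longlongrightarrow> 0) at_top"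
  using assms by real_asymp
lemma asy4: fixes c g :: real assumes "c>0" "g>0"
  shows "filterlim (\<lambda>x::real. (c * ln x) powr (1/g)) at_top at_top"
  using assms by real_asymp



lemma ev_lt:
  fixes f :: "'a \<Rightarrow> real"
  assumes [measurable]: "f \<in> borel_measurable M"
  shows "{\<omega>\<in>space M. f \<omega> < c} \<in> sets M"
  by measurable

lemma sum_ind_card:
  assumes "finite I"
  shows "(\<Sum>i\<in>I. indicator (S i) \<omega> :: real) = real (card {i\<in>I. \<omega> \<in> S i})"
proof -
  have "(\<Sum>i\<in>I. indicator (S i) \<omega> :: real) = (\<Sum>i\<in>{i\<in>I. \<omega> \<in> S i}. 1)"
    using assms by (simp add: indicator_def sum.If_cases Int_def)
  then show ?thesis by simp
qed

theorem mainTheorem7: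
  fixes M :: "'a measure" and X :: "nat \<Rightarrow> 'a \<Rightarrow> real" and m :: nat
    and MK :: "nat \<Rightarrow> nat"
  assumes P: "prob_space M"
    and meas: "\<And>k. k \<ge> 1 \<Longrightarrow> X k \<in> borel_measurable M"
    and ident: "\<And>k. k \<ge> 1 \<Longrightarrow> distr M borel (X k) = distr M borel (X 1)"
    and unbounded: "\<And>x. measure M {\<omega> \<in> space M. X 1 \<omega> > x} > 0"
    and mdep: "m_dependent M m X"
    and cont: "continuous_on UNIV (\<lambda>x. measure M {\<omega> \<in> space M. X 1 \<omega> \<le> x})"
    and tail: "exp_dominated_tail (\<lambda>x. measure M {\<omega> \<in> space M. X 1 \<omega> \<le> x})"
    and MK_pos: "\<And>K. MK K > 0"
    and MK_inf: "filterlim MK at_top sequentially"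
    and MK_small: "\<exists>\<mu>::real. \<mu> < 1 \<and>
                     ((\<lambda>K. real (MK K) / (ln (real K)) powr \<mu>) \<longlongrightarrow> 0) sequentially"
  shows "\<forall>\<epsilon>>0. ((\<lambda>K. measure M {\<omega> \<in> space M.
            \<bar>order_stat (\<lambda>k. X k \<omega>) K (K - MK K + 1) / order_stat (\<lambda>k. X k \<omega>) K K - 1\<bar> > \<epsilon>})
          \<longlongrightarrow> 0) sequentially"
proof -
  interpret P: prob_space M by (rule P)
  obtain \<mu> :: real where mu: "((\<lambda>K. real (MK K) / (ln (real K)) powr \<mu>) \<longlongrightarrow> 0) sequentially"
    using MK_small by blast
  obtain \<alpha> \<beta> lam \<gamma> :: real where pars: "\<alpha> > 0" "lam > 0" "\<gamma> > 0"
    and lim: "((\<lambda>x. (1 - measure M {\<omega> \<in> space M. X 1 \<omega> \<le> x}) / (\<alpha> * x powr \<beta> * exp (- lam * x powr \<gamma>))) \<longlongrightarrow> 1) at_top"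
    using tail unfolding exp_dominated_tail_def by blast
  define G where "G x = measure M {\<omega> \<in> space M. X 1 \<omega> > x}" for x
  define h where "h x = \<alpha> * x powr \<beta> * exp (- lam * x powr \<gamma>)" for x :: real
  have m1: "X 1 \<in> borel_measurable M" by (rule meas) simp
  have evX: "{\<omega>\<in>space M. c < X i \<omega>} \<in> P.events" if "i \<ge> 1" for i c
    by (rule P.ev_gt[OF meas[OF that]])
  have FG: "1 - measure M {\<omega> \<in> space M. X 1 \<omega> \<le> x} = G x" for x
  proof -
    have "{\<omega> \<in> space M. X 1 \<omega> > x} = space M - {\<omega> \<in> space M. X 1 \<omega> \<le> x}" by auto
    moreover have "{\<omega> \<in> space M. X 1 \<omega> \<le> x} \<in> P.events" using m1 by measurable
    ultimately show ?thesis unfolding G_def by (simp add: P.prob_compl)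
  qed
  have hpos: "x > 0 \<Longrightarrow> h x > 0" for x unfolding h_def using pars by simp
  have evGh: "eventually (\<lambda>x. G x \<le> 2 * h x \<and> h x / 2 \<le> G x) at_top"
  proof -
    have "eventually (\<lambda>x. G x / h x < 2) at_top"
      using order_tendstoD(2)[OF lim, of 2] unfolding FG h_def by simp
    moreover have "eventually (\<lambda>x. G x / h x > 1/2) at_top"
      using order_tendstoD(1)[OF lim, of "1/2"] unfolding FG h_def by simp
    moreover have "eventually (\<lambda>x::real. x > 0) at_top" by (rule eventually_gt_at_top)
    ultimately show ?thesis
    proof eventually_elim
      case (elim x)
      then have hp: "h x > 0" using hpos by simp
      from elim have "G x < 2 * h x" "h x / 2 < G x" using hp by (simp_all add: field_simps)
      then show ?case by simp
    qed
  qed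
  show ?thesis
  proof (intro allI impI)
    fix \<epsilon> :: real assume "\<epsilon> > 0"
    define e where "e = min \<epsilon> (1/2)"
    have e: "0 < e" "e \<le> \<epsilon>" "e \<le> 1/2" using \<open>\<epsilon> > 0\<close> unfolding e_def by auto
    define r where "r = (1 - e) powr \<gamma>"
    have r: "0 < r" "r < 1" unfolding r_def using e pars powr_less_mono2[of \<gamma> "1-e" 1] by auto
    have r_root: "r powr (1/\<gamma>) = 1 - e" unfolding r_def using e pars by (simp add: powr_powr)
    define \<delta> where "\<delta> = (1 - r) / (1 + r)"
    have \<delta>: "0 < \<delta>" "\<delta> < 1" unfolding \<delta>_def using r by (auto simp: field_simps)
    have \<delta>r: "(1 - \<delta>) / (1 + \<delta>) = r" unfolding \<delta>_def using r by (simp add: field_simps)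
    define ca where "ca = (1 + \<delta>) / lam"
    define cb where "cb = (1 - \<delta>) / lam"
    have cab: "ca > 0" "cb > 0" unfolding ca_def cb_def using \<delta> pars by auto
    define a where "a K = (ca * ln (real K)) powr (1/\<gamma>)" for K :: nat
    define b where "b K = (cb * ln (real K)) powr (1/\<gamma>)" for K :: nat
    define U where "U K = real K * (2 * (\<alpha> * (ca * ln (real K)) powr (\<beta>/\<gamma>) * exp (-(1+\<delta>) * ln (real K))))" for K :: nat
    define L where "L K = real K * (\<alpha> * (cb * ln (real K)) powr (\<beta>/\<gamma>) * exp (-(1-\<delta>) * ln (real K)) / 2)" for K :: nat
    have U0: "(U \<longlongrightarrow> 0) sequentially"
      unfolding U_def using filterlim_compose[OF asy1[OF \<delta>(1) cab(1) pars(1), of "\<beta>/\<gamma>"] filterlim_real_sequentially]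
      by (simp add: o_def)
    have Linf: "filterlim L at_top sequentially"
      unfolding L_def using filterlim_compose[OF asy2[OF \<delta> cab(2) pars(1), of "\<beta>/\<gamma>"] filterlim_real_sequentially]
      by (simp add: o_def)
    have L3: "((\<lambda>K. ln (real K) powr \<mu> / L K) \<longlongrightarrow> 0) sequentially"
      unfolding L_def using filterlim_compose[OF asy3[OF \<delta> cab(2) pars(1), of \<mu> "\<beta>/\<gamma>"] filterlim_real_sequentially]
      by (simp add: o_def)
    have ainf: "filterlim a at_top sequentially"
      unfolding a_def using filterlim_compose[OF asy4[OF cab(1) pars(3)] filterlim_real_sequentially]
      by (simp add: o_def)
    have binf: "filterlim b at_top sequentially"
      unfolding b_def using filterlim_compose[OF asy4[OF cab(2) pars(3)] filterlim_real_sequentially]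
      by (simp add: o_def)
    have ha: "h (a K) = \<alpha> * (ca * ln (real K)) powr (\<beta>/\<gamma>) * exp (-(1+\<delta>) * ln (real K))" if "K \<ge> 2" for K
    proof -
      have t: "ca * ln (real K) > 0" using cab that by simp
      have "a K powr \<beta> = (ca * ln (real K)) powr (\<beta>/\<gamma>)" unfolding a_def by (simp add: powr_powr)
      moreover have "a K powr \<gamma> = ca * ln (real K)" unfolding a_def using t pars by (simp add: powr_powr)
      moreover have "- lam * (ca * ln (real K)) = -(1+\<delta>) * ln (real K)" unfolding ca_def using pars by (simp add: field_simps)
      ultimately show ?thesis unfolding h_def by simp
    qed
    have hb: "h (b K) = \<alpha> * (cb * ln (real K)) powr (\<beta>/\<gamma>) * exp (-(1-\<delta>) * ln (real K))" if "K \<ge> 2" for K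
    proof -
      have t: "cb * ln (real K) > 0" using cab that by simp
      have "b K powr \<beta> = (cb * ln (real K)) powr (\<beta>/\<gamma>)" unfolding b_def by (simp add: powr_powr)
      moreover have "b K powr \<gamma> = cb * ln (real K)" unfolding b_def using t pars by (simp add: powr_powr)
      moreover have "- lam * (cb * ln (real K)) = -(1-\<delta>) * ln (real K)" unfolding cb_def using pars by (simp add: field_simps)
      ultimately show ?thesis unfolding h_def by simp
    qed
    have ba: "b K / a K = 1 - e" if "K \<ge> 2" for K
    proof -
      have t: "ca * ln (real K) > 0" "cb * ln (real K) > 0" using cab that by auto
      have "b K / a K = (cb * ln (real K) / (ca * ln (real K))) powr (1/\<gamma>)"
        unfolding a_def b_def by (rule powr_divide[symmetric])
      also have "cb * ln (real K) / (ca * ln (real K)) = cb / ca"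
        using that by simp
      also have "cb / ca = r"
        using \<delta>r pars unfolding ca_def cb_def by simp
      finally show ?thesis using r_root by simp
    qed
    define S where "S K = {\<omega> \<in> space M.
            \<bar>order_stat (\<lambda>k. X k \<omega>) K (K - MK K + 1) / order_stat (\<lambda>k. X k \<omega>) K K - 1\<bar> > \<epsilon>}" for K
    define T1 where "T1 K = real K * G (a K)" for K
    define T2 where "T2 K = 4 * (2 * real m + 1) / (real K * G (b K))" for K
    have ev1: "eventually (\<lambda>K. G (a K) \<le> 2 * h (a K) \<and> h (a K) / 2 \<le> G (a K)) sequentially"
      using ainf evGh unfolding filterlim_iff by blast
    have ev2: "eventually (\<lambda>K. G (b K) \<le> 2 * h (b K) \<and> h (b K) / 2 \<le> G (b K)) sequentially"
      using binf evGh unfolding filterlim_iff by blast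
    have ev3: "eventually (\<lambda>K. real (MK K) / (ln (real K)) powr \<mu> < 1) sequentially"
      using order_tendstoD(2)[OF mu, of 1] by simp
    have ev4: "eventually (\<lambda>K. ln (real K) powr \<mu> / L K < 1/2) sequentially"
      using order_tendstoD(2)[OF L3, of "1/2"] by simp
    have ev5: "eventually (\<lambda>K. L K > 0) sequentially"
      using Linf by (simp add: filterlim_at_top_dense)
    have ev6: "eventually (\<lambda>K::nat. K \<ge> 2) sequentially" by (rule eventually_ge_at_top)
    have main: "eventually (\<lambda>K. measure M (S K) \<le> T1 K + T2 K \<and> T1 K \<le> U K \<and> L K \<le> real K * G (b K)) sequentially"
      using ev1 ev2 ev3 ev4 ev5 ev6
    proof eventually_elim
      case (elim K)
      have K2: "K \<ge> 2" using elim by simp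
      have lnK: "ln (real K) > 0" using K2 by simp
      have Kp: "L K \<le> real K * G (b K)"
        using elim hb[OF K2] unfolding L_def by (simp add: mult_left_mono)

      define p where "p = G (b K)"
      have Kp_pos: "real K * p > 0" using Kp elim unfolding p_def by linarith
      have lnmu: "ln (real K) powr \<mu> > 0" using lnK by simp
      have MKlt: "real (MK K) < ln (real K) powr \<mu>" using elim lnmu by (simp add: divide_less_eq)
      have lnL: "ln (real K) powr \<mu> < L K / 2" using elim by (simp add: divide_less_eq)
      have Mle: "2 * real (MK K) \<le> real K * p" using MKlt lnL Kp unfolding p_def by linarith
      have p1: "p \<le> 1" unfolding p_def G_def by simp
      have "real K * p \<le> real K" using p1 by (simp add: mult_left_le)
      then have MKK: "MK K \<le> K" using Mle by linarith
      have MK1: "1 \<le> MK K" using MK_pos[of K] by simp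
      have bpos: "b K > 0" unfolding b_def using cab lnK by simp
      have apos: "a K > 0" unfolding a_def using cab lnK by simp
      define U' where "U' = {\<omega>\<in>space M. \<exists>i\<in>{1..K}. X i \<omega> > a K}"
      define V where "V = {\<omega>\<in>space M. (\<Sum>i\<in>{1..K}. indicator {\<omega>\<in>space M. X i \<omega> > b K} \<omega>) < real (MK K)}"
      have sub: "S K \<subseteq> U' \<union> V"
      proof
        fix \<omega> assume w: "\<omega> \<in> S K"
        show "\<omega> \<in> U' \<union> V"
        proof (rule ccontr)
          assume "\<omega> \<notin> U' \<union> V"
          then have wsp: "\<omega> \<in> space M" and nU: "\<forall>i\<in>{1..K}. X i \<omega> \<le> a K"
            and nV: "real (MK K) \<le> (\<Sum>i\<in>{1..K}. indicator {\<omega>\<in>space M. X i \<omega> > b K} \<omega>)"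
            using w unfolding S_def U'_def V_def by auto
          have "(\<Sum>i\<in>{1..K}. indicator {\<omega>\<in>space M. X i \<omega> > b K} \<omega> :: real)
                = real (card {i\<in>{1..K}. \<omega> \<in> {\<omega>\<in>space M. X i \<omega> > b K}})"
            by (rule sum_ind_card) simp
          also have "{i\<in>{1..K}. \<omega> \<in> {\<omega>\<in>space M. X i \<omega> > b K}} = {i\<in>{1..K}. b K < X i \<omega>}"
            using wsp by auto
          finally have card: "MK K \<le> card {i\<in>{1..K}. b K < X i \<omega>}" using nV by linarith
          define Y where "Y = order_stat (\<lambda>k. X k \<omega>) K (K - MK K + 1)"
          define Z where "Z = order_stat (\<lambda>k. X k \<omega>) K K"
          have Zle: "Z \<le> a K" unfolding Z_def using K2 nU by (intro os_max_le) auto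
          have Yb: "b K < Y" unfolding Y_def using MK1 MKK card by (intro os_count) auto
          have YZ: "Y \<le> Z" unfolding Y_def Z_def using MK1 MKK by (rule os_mono)
          have Zpos: "Z > 0" using Yb YZ bpos by linarith
          have "b K / a K \<le> Y / Z" using Yb Zle Zpos bpos by (intro frac_le) auto
          then have low: "1 - e \<le> Y / Z" using ba[OF K2] by simp
          have up: "Y / Z \<le> 1" using YZ Zpos by simp
          have "\<bar>Y / Z - 1\<bar> \<le> \<epsilon>" using low up e by linarith
          moreover have "\<bar>Y / Z - 1\<bar> > \<epsilon>" using w unfolding S_def Y_def Z_def by simp
          ultimately show False by simp
        qed
      qed
      have Uev: "U' \<in> P.events"
      proof -
        have "U' = (\<Union>i\<in>{1..K}. {\<omega>\<in>space M. a K < X i \<omega>})" unfolding U'_def by auto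
        also have "\<dots> \<in> P.events"
          using evX by (intro sets.finite_UN) auto
        finally show ?thesis .
      qed
      have fm: "(\<lambda>\<omega>. \<Sum>i\<in>{1..K}. indicator {\<omega>\<in>space M. X i \<omega> > b K} \<omega> :: real) \<in> borel_measurable M"
        using evX by (intro borel_measurable_sum) (auto intro: borel_measurable_indicator)
      have Vev: "V \<in> P.events" unfolding V_def by (rule ev_lt[OF fm])
      have "measure M (S K) \<le> measure M (U' \<union> V)"
      proof (cases "S K \<in> P.events")
        case True
        then show ?thesis using sub Uev Vev by (intro P.finite_measure_mono) auto
      next
        case False
        then show ?thesis by (simp add: measure_notin_sets)
      qed
      also have "\<dots> \<le> measure M U' + measure M V" using Uev Vev by (rule measure_Un_le)
      also have "measure M U' \<le> T1 K"
        unfolding U'_def T1_def G_def by (rule P.union_bound[of X, OF meas ident])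
      also have "measure M V \<le> T2 K"
        unfolding V_def T2_def
        by (rule P.count_bound[of X, OF meas ident mdep _ _ Kp_pos[unfolded p_def]])
           (use Mle in \<open>auto simp: p_def G_def\<close>)
      finally have m: "measure M (S K) \<le> T1 K + T2 K" by simp
      have "T1 K \<le> U K"
        unfolding T1_def U_def using elim ha[OF K2] by (simp add: mult_left_mono)
      then show ?case using m Kp by simp
    qed
    have T1lim: "(T1 \<longlongrightarrow> 0) sequentially"
    proof (rule tendsto_sandwich[of "\<lambda>_. 0" T1 sequentially U 0])
      show "eventually (\<lambda>K. 0 \<le> T1 K) sequentially" unfolding T1_def G_def by simp
      show "eventually (\<lambda>K. T1 K \<le> U K) sequentially" using main by eventually_elim simp
    qed (use U0 in auto)
    have KGb: "filterlim (\<lambda>K. real K * G (b K)) at_top sequentially"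
      by (rule filterlim_at_top_mono[OF Linf]) (use main in \<open>eventually_elim, simp\<close>)
    have T2lim: "(T2 \<longlongrightarrow> 0) sequentially"
      unfolding T2_def
      by (rule tendsto_divide_0[OF tendsto_const filterlim_at_top_imp_at_infinity[OF KGb]])
    have T12: "((\<lambda>K. T1 K + T2 K) \<longlongrightarrow> 0) sequentially"
      using tendsto_add[OF T1lim T2lim] by simp
    have "((\<lambda>K. measure M (S K)) \<longlongrightarrow> 0) sequentially"
    proof (rule tendsto_sandwich[of "\<lambda>_. 0" _ sequentially "\<lambda>K. T1 K + T2 K" 0])
      show "eventually (\<lambda>K. 0 \<le> measure M (S K)) sequentially" by simp
      show "eventually (\<lambda>K. measure M (S K) \<le> T1 K + T2 K) sequentially" using main by eventually_elim simp
    qed (use T12 in auto)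
    then show "((\<lambda>K. measure M {\<omega> \<in> space M.
            \<bar>order_stat (\<lambda>k. X k \<omega>) K (K - MK K + 1) / order_stat (\<lambda>k. X k \<omega>) K K - 1\<bar> > \<epsilon>})
          \<longlongrightarrow> 0) sequentially" unfolding S_def .
  qed
qed


end
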